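(* Let $\mathcal A$ be a unital C*-subalgebra of $l^\infty(\mathbb N)$ with maximal ideal space $X$ (weak* topology), and let $\iota:\mathbb N\to X$ be given by $\iota(n)(f)=f(n)$ for $f\in\mathcal A$. Then $\mathcal A$ is invariant under $\sigma_A$ (i.e. is an anqie) if and only if the map $\iota(n)\mapsto\iota(n+1)$ on $\iota(\mathbb N)$ extends to a continuous map from $X$ to $X$.
   Context: $\mathbb N=\{0,1,2,\ldots\}$ and $l^\infty(\mathbb N)$ is the C*-algebra of bounded complex-valued functions on $\mathbb N$; $\sigma_A:l^\infty(\mathbb N)\to l^\infty(\mathbb N)$ is $(\sigma_Af)(n)=f(n+1)$. An anqie is a unital C*-subalgebra of $l^\infty(\mathbb N)$ invariant under $\sigma_A$. The maximal ideal space of $\mathcal A$ is identified with the space of multiplicative states (nonzero characters) of $\mathcal A$. *)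

theory Defs
  imports "HOL-Analysis.Analysis"
begin

definition linfty :: "(nat \<Rightarrow> complex) set" where
  "linfty = {f. bounded (range f)}"

definition shiftA :: "(nat \<Rightarrow> complex) \<Rightarrow> (nat \<Rightarrow> complex)" where
  "shiftA f = (\<lambda>n. f (Suc n))"

definition unital_cstar_subalg :: "(nat \<Rightarrow> complex) set \<Rightarrow> bool" where
  "unital_cstar_subalg A \<longleftrightarrow>
     A \<subseteq> linfty \<and>
     (\<lambda>n. 1) \<in> A \<and>
     (\<forall>f\<in>A. \<forall>g\<in>A. (\<lambda>n. f n + g n) \<in> A) \<and>
     (\<forall>c. \<forall>f\<in>A. (\<lambda>n. c * f n) \<in> A) \<and>
     (\<forall>f\<in>A. \<forall>g\<in>A. (\<lambda>n. f n * g n) \<in> A) \<and>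
     (\<forall>f\<in>A. (\<lambda>n. cnj (f n)) \<in> A) \<and>
     (\<forall>f\<in>linfty. (\<forall>e>0. \<exists>g\<in>A. \<forall>n. norm (f n - g n) \<le> e) \<longrightarrow> f \<in> A)"

definition anqie :: "(nat \<Rightarrow> complex) set \<Rightarrow> bool" where
  "anqie A \<longleftrightarrow> unital_cstar_subalg A \<and> (\<forall>f\<in>A. shiftA f \<in> A)"

text \<open>Maximal ideal space: nonzero multiplicative linear functionals on A
  (represented extensionally, i.e. undefined outside A).\<close>
definition max_ideal_space :: "(nat \<Rightarrow> complex) set \<Rightarrow> ((nat \<Rightarrow> complex) \<Rightarrow> complex) set" where
  "max_ideal_space A = {\<phi>. \<phi> \<in> extensional A \<and>
     (\<forall>f\<in>A. \<forall>g\<in>A. \<phi> (\<lambda>n. f n + g n) = \<phi> f + \<phi> g) \<and>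
     (\<forall>c. \<forall>f\<in>A. \<phi> (\<lambda>n. c * f n) = c * \<phi> f) \<and>
     (\<forall>f\<in>A. \<forall>g\<in>A. \<phi> (\<lambda>n. f n * g n) = \<phi> f * \<phi> g) \<and>
     (\<exists>f\<in>A. \<phi> f \<noteq> 0)}"

definition weakstar_top :: "(nat \<Rightarrow> complex) set \<Rightarrow> ((nat \<Rightarrow> complex) \<Rightarrow> complex) topology" where
  "weakstar_top A = subtopology (product_topology (\<lambda>_. euclidean) A) (max_ideal_space A)"

definition iota :: "(nat \<Rightarrow> complex) set \<Rightarrow> nat \<Rightarrow> ((nat \<Rightarrow> complex) \<Rightarrow> complex)" where
  "iota A n = restrict (\<lambda>f. f n) A"

end

theory Submission
  imports Defs
begin

typedef ch = "UNIV :: ((nat \<Rightarrow> complex) \<Rightarrow> complex) set" by auto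

instantiation ch :: topological_space
begin
definition open_ch :: "ch set \<Rightarrow> bool" where "open_ch U \<longleftrightarrow> open (Rep_ch ` U)"
instance
proof
  show "open (UNIV :: ch set)" unfolding open_ch_def
    by (simp add: type_definition.Rep_range[OF type_definition_ch])
next
  fix S T :: "ch set" assume "open S" "open T"
  moreover have "Rep_ch ` (S \<inter> T) = Rep_ch ` S \<inter> Rep_ch ` T"
    by (simp add: image_Int Rep_ch_inject inj_on_def)
  ultimately show "open (S \<inter> T)" unfolding open_ch_def by auto
next
  fix K :: "ch set set" assume "\<forall>S\<in>K. open S"
  then show "open (\<Union>K)" unfolding open_ch_def by (auto simp: image_Union)
qed
end

lemma fun_hausdorff:
  fixes x y :: "'a \<Rightarrow> 'b::t2_space"
  assumes "x \<noteq> y"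
  shows "\<exists>U V. open U \<and> open V \<and> x \<in> U \<and> y \<in> V \<and> U \<inter> V = {}"
proof -
  from assms obtain i where xi: "x i \<noteq> y i" by auto
  from hausdorff[OF xi] obtain U V where UV: "open U" "open V" "x i \<in> U" "y i \<in> V" "U \<inter> V = {}"
    by blast
  have o1: "open ((\<lambda>f. f i) -` U)" by (rule open_vimage[OF UV(1)]) simp
  have o2: "open ((\<lambda>f. f i) -` V)" by (rule open_vimage[OF UV(2)]) simp
  have d: "(\<lambda>f. f i) -` U \<inter> (\<lambda>f. f i) -` V = {}"
    by (simp only: vimage_Int[symmetric] UV(5) vimage_empty)
  have m: "x \<in> (\<lambda>f. f i) -` U" "y \<in> (\<lambda>f. f i) -` V" using UV(3,4) by simp_all
  show ?thesis
    by (intro exI conjI, rule o1, rule o2, rule m(1), rule m(2), rule d)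
qed

instance ch :: t2_space
proof
  fix x y :: ch assume "x \<noteq> y"
  then have "Rep_ch x \<noteq> Rep_ch y" by (simp add: Rep_ch_inject)
  from fun_hausdorff[OF this] obtain U V where UV: "open U" "open V" "Rep_ch x \<in> U" "Rep_ch y \<in> V" "U \<inter> V = {}"
    by blast
  have im: "Rep_ch ` (Rep_ch -` W) = W" for W
    by (simp add: image_vimage_eq type_definition.Rep_range[OF type_definition_ch])
  have o1: "open (Rep_ch -` U)" "open (Rep_ch -` V)" unfolding open_ch_def im using UV by simp_all
  have d: "Rep_ch -` U \<inter> Rep_ch -` V = {}"
    by (simp only: vimage_Int[symmetric] UV(5) vimage_empty)
  have m: "x \<in> Rep_ch -` U" "y \<in> Rep_ch -` V" using UV(3,4) by simp_all
  show "\<exists>U V. open U \<and> open V \<and> x \<in> U \<and> y \<in> V \<and> U \<inter> V = {}"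
    by (intro exI conjI, rule o1(1), rule o1(2), rule m(1), rule m(2), rule d)
qed

lemma cont_Rep_ch: "continuous_on UNIV Rep_ch"
proof -
  have im: "Rep_ch ` (Rep_ch -` W) = W" for W
    by (simp add: image_vimage_eq type_definition.Rep_range[OF type_definition_ch])
  show ?thesis unfolding continuous_on_open_invariant open_ch_def
    using im by auto
qed

lemma cont_Abs_ch: "continuous_on UNIV Abs_ch"
proof -
  have im: "Abs_ch -` W = Rep_ch ` W" for W
  proof (intro set_eqI iffI)
    fix x assume "x \<in> Abs_ch -` W"
    then show "x \<in> Rep_ch ` W" by (intro image_eqI[of _ _ "Abs_ch x"]) (auto simp: Abs_ch_inverse)
  next
    fix x assume "x \<in> Rep_ch ` W"
    then show "x \<in> Abs_ch -` W" by (auto simp: Rep_ch_inverse)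
  qed
  show ?thesis unfolding continuous_on_open_invariant open_ch_def
    using im by auto
qed

locale csa =
  fixes A :: "(nat \<Rightarrow> complex) set"
  assumes csa: "unital_cstar_subalg A"
begin

abbreviation "X \<equiv> max_ideal_space A"

lemma sub: "A \<subseteq> linfty" and one: "(\<lambda>n. 1) \<in> A"
  and add: "f \<in> A \<Longrightarrow> g \<in> A \<Longrightarrow> (\<lambda>n. f n + g n) \<in> A"
  and smult: "f \<in> A \<Longrightarrow> (\<lambda>n. c * f n) \<in> A"
  and mult: "f \<in> A \<Longrightarrow> g \<in> A \<Longrightarrow> (\<lambda>n. f n * g n) \<in> A"
  and cnjA: "f \<in> A \<Longrightarrow> (\<lambda>n. cnj (f n)) \<in> A"
  and closedA: "f \<in> linfty \<Longrightarrow> (\<And>e. e > 0 \<Longrightarrow> \<exists>g\<in>A. \<forall>n. norm (f n - g n) \<le> e) \<Longrightarrow> f \<in> A"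
  using csa unfolding unital_cstar_subalg_def by blast+

lemma const: "(\<lambda>n. c) \<in> A"
  using smult[OF one, of c] by simp

lemma bnd: "f \<in> A \<Longrightarrow> \<exists>K. \<forall>n. norm (f n) \<le> K"
  using sub unfolding linfty_def by (auto simp: bounded_iff)

lemma pow: "f \<in> A \<Longrightarrow> (\<lambda>n. f n ^ k) \<in> A"
proof (induction k)
  case 0 then show ?case using one by simp
next
  case (Suc k) then show ?case using mult[OF Suc.prems Suc.IH] by simp
qed

lemma psum: "f \<in> A \<Longrightarrow> (\<lambda>n. \<Sum>k<N. f n ^ k) \<in> A"
proof (induction N)
  case 0 then show ?case using const[of 0] by simp
next
  case (Suc N) then show ?case using add[OF Suc.IH pow[OF Suc.prems, of N]] by simp
qed

lemma inv_in_A: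
  assumes f: "f \<in> A" and q: "q < 1" and fq: "\<And>n. norm (1 - f n) \<le> q"
  shows "(\<lambda>n. 1 / f n) \<in> A"
proof -
  define r where "r = (\<lambda>n. 1 - f n)"
  have rA: "r \<in> A" unfolding r_def using add[OF one smult[OF f, of "-1"]] by simp
  have q0: "0 \<le> q" using fq[of 0] by (meson norm_ge_zero order_trans)
  have fge: "norm (f n) \<ge> 1 - q" for n
  proof -
    have "1 = norm (f n + (1 - f n))" by simp
    also have "\<dots> \<le> norm (f n) + norm (1 - f n)" by (rule norm_triangle_ineq)
    finally show ?thesis using fq[of n] by linarith
  qed
  then have fnz: "f n \<noteq> 0" for n using q by (metis norm_zero not_le diff_gt_0_iff_gt)
  show ?thesis
  proof (rule closedA)
    have "norm (1 / f n) \<le> 1 / (1 - q)" for n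
      using fge[of n] q by (simp add: norm_divide divide_simps)
    then show "(\<lambda>n. 1 / f n) \<in> linfty" unfolding linfty_def
      by (auto simp: bounded_iff)
  next
    fix e :: real assume e: "e > 0"
    obtain N where N: "q ^ N < e * (1 - q)" using real_arch_pow_inv[of "e * (1-q)" q] e q by auto
    have "\<forall>n. norm (1 / f n - (\<Sum>k<N. r n ^ k)) \<le> e"
    proof
      fix n
      have "f n * (\<Sum>k<N. r n ^ k) = 1 - r n ^ N"
        using one_diff_power_eq[of "r n" N] by (simp add: r_def)
      then have "1 / f n - (\<Sum>k<N. r n ^ k) = r n ^ N / f n"
        using fnz[of n] by (simp add: field_simps)
      then have "norm (1 / f n - (\<Sum>k<N. r n ^ k)) = norm (r n) ^ N / norm (f n)"
        by (simp add: norm_divide norm_power)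
      also have "\<dots> \<le> q ^ N / (1 - q)"
        apply (rule frac_le)
        using q0 fq[of n] fge[of n] q by (auto simp: r_def intro: power_mono)
      also have "\<dots> \<le> e" using N q by (simp add: divide_simps)
      finally show "norm (1 / f n - (\<Sum>k<N. r n ^ k)) \<le> e" .
    qed
    then show "\<exists>g\<in>A. \<forall>n. norm (1 / f n - g n) \<le> e" using psum[OF rA, of N]
      by (intro bexI[of _ "\<lambda>n. \<Sum>k<N. r n ^ k"]) auto
  qed
qed


lemma charD:
  assumes "\<phi> \<in> X"
  shows "\<phi> \<in> extensional A"
    and "f \<in> A \<Longrightarrow> g \<in> A \<Longrightarrow> \<phi> (\<lambda>n. f n + g n) = \<phi> f + \<phi> g"
    and "f \<in> A \<Longrightarrow> \<phi> (\<lambda>n. c * f n) = c * \<phi> f"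
    and "f \<in> A \<Longrightarrow> g \<in> A \<Longrightarrow> \<phi> (\<lambda>n. f n * g n) = \<phi> f * \<phi> g"
    and "\<exists>f\<in>A. \<phi> f \<noteq> 0"
  using assms unfolding max_ideal_space_def by blast+

lemma char_one: assumes "\<phi> \<in> X" shows "\<phi> (\<lambda>n. 1) = 1"
proof -
  obtain f where f: "f \<in> A" "\<phi> f \<noteq> 0" using charD(5)[OF assms] by blast
  have "\<phi> (\<lambda>n. f n * 1) = \<phi> f * \<phi> (\<lambda>n. 1)" by (rule charD(4)[OF assms f(1) one])
  then have "\<phi> f = \<phi> f * \<phi> (\<lambda>n. 1)" by simp
  then show ?thesis using f(2) by simp
qed

lemma char_const: assumes "\<phi> \<in> X" shows "\<phi> (\<lambda>n. c) = c"
  using charD(3)[OF assms one, of c] char_one[OF assms] by simp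

lemma char_bound:
  assumes phi: "\<phi> \<in> X" and f: "f \<in> A" and K: "\<And>n. norm (f n) \<le> K"
  shows "norm (\<phi> f) \<le> K"
proof (rule ccontr)
  assume "\<not> norm (\<phi> f) \<le> K"
  then have lK: "norm (\<phi> f) > K" by simp
  define lam where "lam = \<phi> f"
  have K0: "K \<ge> 0" using K[of 0] by (meson norm_ge_zero order_trans)
  have lnz: "lam \<noteq> 0" using lK K0 lam_def by auto
  define c where "c = - 1 / lam"
  define h where "h = (\<lambda>n. 1 + c * f n)"
  have hA: "h \<in> A" unfolding h_def using add[OF one smult[OF f, of c]] by simp
  have ph: "\<phi> h = 0"
    unfolding h_def using charD(2)[OF phi one smult[OF f, of c]] charD(3)[OF phi f, of c]
      char_one[OF phi] lnz by (simp add: c_def lam_def[symmetric])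
  define q where "q = K / norm lam"
  have q1: "q < 1" using lK lnz by (simp add: q_def lam_def divide_simps)
  have hq: "norm (1 - h n) \<le> q" for n
  proof -
    have "norm (1 - h n) = norm (f n) / norm lam"
      by (simp add: h_def c_def norm_divide norm_mult)
    also have "\<dots> \<le> q" unfolding q_def using K[of n] lnz by (simp add: divide_right_mono)
    finally show ?thesis .
  qed
  have hnz: "h n \<noteq> 0" for n using hq[of n] q1 by auto
  have kA: "(\<lambda>n. 1 / h n) \<in> A" by (rule inv_in_A[OF hA q1 hq])
  have "\<phi> (\<lambda>n. h n * (1 / h n)) = \<phi> h * \<phi> (\<lambda>n. 1 / h n)" by (rule charD(4)[OF phi hA kA])
  moreover have "(\<lambda>n. h n * (1 / h n)) = (\<lambda>n. 1)" using hnz by auto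
  ultimately show False using ph char_one[OF phi] by simp
qed

lemma char_real:
  assumes phi: "\<phi> \<in> X" and h: "h \<in> A" and hr: "\<And>n. Im (h n) = 0"
  shows "Im (\<phi> h) = 0"
proof (rule ccontr)
  assume bnz: "Im (\<phi> h) \<noteq> 0"
  define a where "a = Re (\<phi> h)"
  define b where "b = Im (\<phi> h)"
  obtain K where K: "\<And>n. norm (h n) \<le> K" using bnd[OF h] by blast
  have K0: "K \<ge> 0" using K[of 0] by (meson norm_ge_zero order_trans)
  define t where "t = (K^2 + 1) / (2 * b)"
  define c where "c = \<i> * complex_of_real t"
  define g where "g = (\<lambda>n. h n + c)"
  have gA: "g \<in> A" unfolding g_def using add[OF h const[of c]] by simp
  have pg: "\<phi> g = \<phi> h + c" unfolding g_def using charD(2)[OF phi h const[of c]] char_const[OF phi] by simp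
  have gn: "norm (g n) \<le> sqrt (K^2 + t^2)" for n
  proof -
    have "(norm (g n))^2 = (Re (h n))^2 + t^2"
      using hr[of n] by (simp add: g_def c_def cmod_power2)
    also have "(Re (h n))^2 \<le> K^2"
    proof -
      have "\<bar>Re (h n)\<bar> \<le> K" using abs_Re_le_cmod[of "h n"] K[of n] by linarith
      then show ?thesis by (metis abs_ge_zero power2_abs power_mono)
    qed
    then have "(Re (h n))^2 + t^2 \<le> K^2 + t^2" by simp
    finally have "(norm (g n))^2 \<le> K^2 + t^2" by (simp add: \<open>(cmod (g n))\<^sup>2 = (Re (h n))\<^sup>2 + t\<^sup>2\<close>)
    then show ?thesis by (simp add: real_le_rsqrt)
  qed
  have "norm (\<phi> g) \<le> sqrt (K^2 + t^2)" by (rule char_bound[OF phi gA gn])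
  then have "(norm (\<phi> g))^2 \<le> K^2 + t^2"
    by (metis norm_ge_zero power_mono real_sqrt_pow2 add_nonneg_nonneg zero_le_power2)
  moreover have "(norm (\<phi> g))^2 = a^2 + (b + t)^2"
    using pg by (simp add: cmod_power2 a_def b_def c_def)
  ultimately have "a^2 + b^2 + 2 * b * t \<le> K^2" by (simp add: power2_eq_square algebra_simps)
  moreover have "2 * b * t = K^2 + 1" using bnz by (simp add: t_def b_def)
  ultimately show False by (smt (verit) zero_le_power2)
qed

lemma reA: "h \<in> A \<Longrightarrow> (\<lambda>n. complex_of_real (Re (h n))) \<in> A"
proof -
  assume h: "h \<in> A"
  have "(\<lambda>n. complex_of_real (Re (h n))) = (\<lambda>n. (1/2) * (h n + cnj (h n)))"
    by (auto simp: complex_add_cnj)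
  then show ?thesis by (subst \<open>_ = _\<close>) (rule smult[OF add[OF h cnjA[OF h]]])
qed

lemma imA: "h \<in> A \<Longrightarrow> (\<lambda>n. complex_of_real (Im (h n))) \<in> A"
proof -
  assume h: "h \<in> A"
  have "(\<lambda>n. complex_of_real (Im (h n))) = (\<lambda>n. (- \<i>/2) * (h n + (-1) * cnj (h n)))"
  proof
    fix n
    have "h n + (-1) * cnj (h n) = complex_of_real (2 * Im (h n)) * \<i>"
      using complex_diff_cnj[of "h n"] by simp
    then have "(- \<i>/2) * (h n + (-1) * cnj (h n)) = (- \<i>/2) * (complex_of_real (2 * Im (h n)) * \<i>)"
      by simp
    also have "\<dots> = complex_of_real (Im (h n))"
      by (simp add: complex_eq_iff)
    finally show "complex_of_real (Im (h n)) = (- \<i>/2) * (h n + (-1) * cnj (h n))" by simp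
  qed
  then show ?thesis by (subst \<open>_ = _\<close>) (rule smult[OF add[OF h smult[OF cnjA[OF h]]]])
qed

lemma char_decomp:
  assumes phi: "\<phi> \<in> X" and h: "h \<in> A"
  shows "\<phi> h = \<phi> (\<lambda>n. complex_of_real (Re (h n))) + \<i> * \<phi> (\<lambda>n. complex_of_real (Im (h n)))"
proof -
  have "h = (\<lambda>n. complex_of_real (Re (h n)) + \<i> * complex_of_real (Im (h n)))"
    by (auto simp: complex_eq[symmetric])
  then have "\<phi> h = \<phi> (\<lambda>n. complex_of_real (Re (h n)) + \<i> * complex_of_real (Im (h n)))" by simp
  also have "\<dots> = \<phi> (\<lambda>n. complex_of_real (Re (h n))) + \<i> * \<phi> (\<lambda>n. complex_of_real (Im (h n)))"
    using charD(2)[OF phi reA[OF h] smult[OF imA[OF h], of \<i>]] charD(3)[OF phi imA[OF h], of \<i>]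
    by simp
  finally show ?thesis .
qed

lemma iota_in: "iota A n \<in> X"
  unfolding max_ideal_space_def iota_def
proof (intro CollectI conjI ballI allI)
  show "\<exists>f\<in>A. restrict (\<lambda>f. f n) A f \<noteq> 0" using one by (intro bexI[of _ "\<lambda>n. 1"]) auto
qed (use add mult smult in simp_all)

lemma topspace_ws: "topspace (weakstar_top A) = X"
  unfolding weakstar_top_def topspace_subtopology topspace_product_topology
  using charD(1) by (auto simp: PiE_def)

lemma cont_ws:
  assumes "continuous_map (weakstar_top A) euclidean G"
  shows "continuous_on X G"
proof -
  have id: "continuous_map (top_of_set X) (weakstar_top A) (\<lambda>x. x)"
    unfolding weakstar_top_def
  proof (rule continuous_map_into_subtopology)
    show "continuous_map (top_of_set X) (product_topology (\<lambda>_. euclidean) A) (\<lambda>x. x)"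
      unfolding continuous_map_componentwise
      using charD(1)
      by (auto intro: continuous_on_subset[OF continuous_on_product_coordinates])
  qed auto
  show ?thesis using continuous_map_compose[OF id assms] by (simp add: o_def)
qed

lemma X_eq: "X = {\<phi>. (\<forall>f. f \<notin> A \<longrightarrow> \<phi> f = undefined) \<and>
     (\<forall>f\<in>A. \<forall>g\<in>A. \<phi> (\<lambda>n. f n + g n) = \<phi> f + \<phi> g) \<and>
     (\<forall>c. \<forall>f\<in>A. \<phi> (\<lambda>n. c * f n) = c * \<phi> f) \<and>
     (\<forall>f\<in>A. \<forall>g\<in>A. \<phi> (\<lambda>n. f n * g n) = \<phi> f * \<phi> g) \<and> \<phi> (\<lambda>n. 1) = 1}"
  (is "_ = ?Y")
proof
  show "X \<subseteq> ?Y"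
  proof
    fix \<phi> assume phi: "\<phi> \<in> X"
    show "\<phi> \<in> ?Y"
    proof (intro CollectI conjI ballI allI impI)
      show "\<phi> (\<lambda>n. 1) = 1" by (rule char_one[OF phi])
      show "\<phi> f = undefined" if "f \<notin> A" for f using charD(1)[OF phi] that by (simp add: extensional_def)
    qed (use charD[OF phi] in simp_all)
  qed
  show "?Y \<subseteq> X"
  proof
    fix \<phi> assume phi: "\<phi> \<in> ?Y"
    show "\<phi> \<in> X" unfolding max_ideal_space_def
    proof (intro CollectI conjI)
      show "\<phi> \<in> extensional A" using phi by (simp add: extensional_def)
      show "\<exists>f\<in>A. \<phi> f \<noteq> 0" using phi one by (intro bexI[of _ "\<lambda>n. 1"]) auto
    qed (use phi in simp_all)
  qed
qed

lemma closed_X: "closed X"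
proof -
  have c1: "closed {\<phi>::(nat\<Rightarrow>complex)\<Rightarrow>complex. \<forall>f. f \<notin> A \<longrightarrow> \<phi> f = undefined}"
  proof -
    have "{\<phi>::(nat\<Rightarrow>complex)\<Rightarrow>complex. \<forall>f. f \<notin> A \<longrightarrow> \<phi> f = undefined} = (\<Inter>f\<in>-A. {\<phi>. \<phi> f = undefined})" by auto
    then show ?thesis by (auto intro!: closed_INT closed_Collect_eq continuous_intros)
  qed
  have c2: "closed {\<phi>::(nat\<Rightarrow>complex)\<Rightarrow>complex. \<forall>f\<in>A. \<forall>g\<in>A. \<phi> (\<lambda>n. f n + g n) = \<phi> f + \<phi> g}"
  proof -
    have "{\<phi>::(nat\<Rightarrow>complex)\<Rightarrow>complex. \<forall>f\<in>A. \<forall>g\<in>A. \<phi> (\<lambda>n. f n + g n) = \<phi> f + \<phi> g} = (\<Inter>f\<in>A. \<Inter>g\<in>A. {\<phi>. \<phi> (\<lambda>n. f n + g n) = \<phi> f + \<phi> g})" by auto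
    then show ?thesis by (auto intro!: closed_INT closed_Collect_eq continuous_intros)
  qed
  have c3: "closed {\<phi>::(nat\<Rightarrow>complex)\<Rightarrow>complex. \<forall>c. \<forall>f\<in>A. \<phi> (\<lambda>n. c * f n) = c * \<phi> f}"
  proof -
    have "{\<phi>::(nat\<Rightarrow>complex)\<Rightarrow>complex. \<forall>c. \<forall>f\<in>A. \<phi> (\<lambda>n. c * f n) = c * \<phi> f} = (\<Inter>c. \<Inter>f\<in>A. {\<phi>. \<phi> (\<lambda>n. c * f n) = c * \<phi> f})" by auto
    then show ?thesis by (auto intro!: closed_INT closed_Collect_eq continuous_intros)
  qed
  have c4: "closed {\<phi>::(nat\<Rightarrow>complex)\<Rightarrow>complex. \<forall>f\<in>A. \<forall>g\<in>A. \<phi> (\<lambda>n. f n * g n) = \<phi> f * \<phi> g}"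
  proof -
    have "{\<phi>::(nat\<Rightarrow>complex)\<Rightarrow>complex. \<forall>f\<in>A. \<forall>g\<in>A. \<phi> (\<lambda>n. f n * g n) = \<phi> f * \<phi> g} = (\<Inter>f\<in>A. \<Inter>g\<in>A. {\<phi>. \<phi> (\<lambda>n. f n * g n) = \<phi> f * \<phi> g})" by auto
    then show ?thesis by (auto intro!: closed_INT closed_Collect_eq continuous_intros)
  qed
  have c5: "closed {\<phi>::(nat\<Rightarrow>complex)\<Rightarrow>complex. \<phi> (\<lambda>n. 1) = 1}"
    by (auto intro!: closed_Collect_eq continuous_intros)
  have "X = {\<phi>. \<forall>f. f \<notin> A \<longrightarrow> \<phi> f = undefined} \<inter> {\<phi>. \<forall>f\<in>A. \<forall>g\<in>A. \<phi> (\<lambda>n. f n + g n) = \<phi> f + \<phi> g}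
     \<inter> {\<phi>. \<forall>c. \<forall>f\<in>A. \<phi> (\<lambda>n. c * f n) = c * \<phi> f} \<inter> {\<phi>. \<forall>f\<in>A. \<forall>g\<in>A. \<phi> (\<lambda>n. f n * g n) = \<phi> f * \<phi> g}
     \<inter> {\<phi>. \<phi> (\<lambda>n. 1) = 1}"
    by (subst X_eq) blast
  then show ?thesis using c1 c2 c3 c4 c5 by (simp add: closed_Int)
qed

lemma compact_X: "compact X"
proof -
  define B where "B = (\<lambda>f. if f \<in> A then cball (0::complex) (SOME K. \<forall>n. norm (f n) \<le> K) else {undefined})"
  have sub: "X \<subseteq> PiE UNIV B"
  proof
    fix \<phi> assume phi: "\<phi> \<in> X"
    have "\<phi> f \<in> B f" for f
    proof (cases "f \<in> A")
      case True
      have "\<forall>n. norm (f n) \<le> (SOME K. \<forall>n. norm (f n) \<le> K)"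
        using someI_ex[OF bnd[OF True]] .
      then show ?thesis using char_bound[OF phi True] True by (simp add: B_def)
    next
      case False then show ?thesis using charD(1)[OF phi] by (simp add: B_def extensional_def)
    qed
    then show "\<phi> \<in> PiE UNIV B" by (simp add: PiE_iff)
  qed
  have "compactin (product_topology (\<lambda>_. euclidean) UNIV) (PiE UNIV B)"
    unfolding compactin_PiE by (auto simp: B_def)
  then have "compact (PiE UNIV B)" by (simp add: euclidean_product_topology)
  then have "compact (PiE UNIV B \<inter> X)" using closed_X by (rule compact_Int_closed)
  moreover have "PiE UNIV B \<inter> X = X" using sub by blast
  ultimately show ?thesis by simp
qed

lemma lift_cont: "continuous_on X H \<Longrightarrow> continuous_on (Abs_ch ` X) (\<lambda>x. H (Rep_ch x))"
proof -
  assume H: "continuous_on X H"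
  have "Rep_ch ` Abs_ch ` X = X" by (force simp: Abs_ch_inverse image_iff)
  then have "continuous_on (Abs_ch ` X) (H \<circ> Rep_ch)"
    using continuous_on_compose[OF continuous_on_subset[OF cont_Rep_ch] , of "Abs_ch ` X" H] H by auto
  then show ?thesis by (simp add: o_def)
qed

end

theorem proposition2p3:
  fixes A :: "(nat \<Rightarrow> complex) set"
  assumes "unital_cstar_subalg A"
  shows "anqie A \<longleftrightarrow>
    (\<exists>T. continuous_map (weakstar_top A) (weakstar_top A) T \<and>
         (\<forall>n. T (iota A n) = iota A (Suc n)))"
proof -
  interpret csa A by (rule csa.intro) (rule assms)
  have wseq: "weakstar_top A = subtopology (product_topology (\<lambda>_. euclidean) A) X"
    by (simp add: weakstar_top_def)
  show ?thesis
  proof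
    assume an: "anqie A"
    then have sh: "\<And>f. f \<in> A \<Longrightarrow> shiftA f \<in> A" unfolding anqie_def by blast
    have sh': "\<And>f. f \<in> A \<Longrightarrow> (\<lambda>n. f (Suc n)) \<in> A" using sh unfolding shiftA_def .
    define T :: "((nat \<Rightarrow> complex) \<Rightarrow> complex) \<Rightarrow> (nat \<Rightarrow> complex) \<Rightarrow> complex" where "T = (\<lambda>\<phi>. restrict (\<lambda>f. \<phi> (shiftA f)) A)"
    have e: "shiftA (\<lambda>n. f n + g n) = (\<lambda>n. shiftA f n + shiftA g n)"
      "shiftA (\<lambda>n. c * f n) = (\<lambda>n. c * shiftA f n)"
      "shiftA (\<lambda>n. f n * g n) = (\<lambda>n. shiftA f n * shiftA g n)"
      "shiftA (\<lambda>n. 1) = (\<lambda>n. 1)" for f g c by (simp_all add: shiftA_def)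
    have TX: "T \<phi> \<in> X" if phi: "\<phi> \<in> X" for \<phi>
      unfolding max_ideal_space_def
    proof (intro CollectI conjI ballI allI)
      show "T \<phi> \<in> extensional A" by (simp add: T_def)
      show "T \<phi> (\<lambda>n. f n + g n) = T \<phi> f + T \<phi> g" if "f\<in>A" "g\<in>A" for f g
        using that add[OF that] charD(2)[OF phi sh[OF that(1)] sh[OF that(2)]] by (simp add: T_def e)
      show "T \<phi> (\<lambda>n. c * f n) = c * T \<phi> f" if "f\<in>A" for f c
        using that smult[OF that] charD(3)[OF phi sh[OF that(1)]] by (simp add: T_def e)
      show "T \<phi> (\<lambda>n. f n * g n) = T \<phi> f * T \<phi> g" if "f\<in>A" "g\<in>A" for f g
        using that mult[OF that] charD(4)[OF phi sh[OF that(1)] sh[OF that(2)]] by (simp add: T_def e)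
      show "\<exists>f\<in>A. T \<phi> f \<noteq> 0" using one char_one[OF phi]
        by (intro bexI[of _ "\<lambda>n. 1"]) (simp_all add: T_def e)
    qed
    have c1: "continuous_map (weakstar_top A) (product_topology (\<lambda>_. euclidean) A) T"
      unfolding continuous_map_componentwise
    proof (intro conjI ballI)
      show "T ` topspace (weakstar_top A) \<subseteq> extensional A" by (auto simp: T_def)
      fix k assume k: "k \<in> A"
      have "(\<lambda>\<phi>. T \<phi> k) = (\<lambda>\<phi>. \<phi> (shiftA k))" using k by (simp add: T_def)
      moreover have "continuous_map (weakstar_top A) euclidean (\<lambda>\<phi>. \<phi> (shiftA k))"
        unfolding wseq
        by (rule continuous_map_from_subtopology[OF continuous_map_product_projection[of "shiftA k" A "\<lambda>_. euclidean", OF sh[OF k]]])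
      ultimately show "continuous_map (weakstar_top A) euclidean (\<lambda>\<phi>. T \<phi> k)" by simp
    qed
    have c2: "T \<in> topspace (weakstar_top A) \<rightarrow> X" using TX topspace_ws by auto
    have Tc: "continuous_map (weakstar_top A) (weakstar_top A) T"
      using continuous_map_into_subtopology[OF c1 c2] wseq by simp
    have Ti: "T (iota A n) = iota A (Suc n)" for n
      unfolding T_def iota_def by (rule ext) (auto simp: sh' shiftA_def)
    show "\<exists>T. continuous_map (weakstar_top A) (weakstar_top A) T \<and> (\<forall>n. T (iota A n) = iota A (Suc n))"
      using Tc Ti by blast
  next
    assume "\<exists>T. continuous_map (weakstar_top A) (weakstar_top A) T \<and> (\<forall>n. T (iota A n) = iota A (Suc n))"
    then obtain T where Tc: "continuous_map (weakstar_top A) (weakstar_top A) T"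
      and Ti: "\<And>n. T (iota A n) = iota A (Suc n)" by blast
    show "anqie A" unfolding anqie_def
    proof (intro conjI ballI)
      show "unital_cstar_subalg A" by (rule assms)
      fix f assume f: "f \<in> A"
      define g where "g = (\<lambda>\<phi>. T \<phi> f)"
      have gc: "continuous_on X g"
      proof (rule cont_ws)
        have "continuous_map (weakstar_top A) euclidean (\<lambda>\<phi>. \<phi> f)"
          unfolding wseq
          by (rule continuous_map_from_subtopology[OF continuous_map_product_projection[of f A "\<lambda>_. euclidean", OF f]])
        from continuous_map_compose[OF Tc this] show "continuous_map (weakstar_top A) euclidean g"
          by (simp add: g_def o_def)
      qed
      have gi: "g (iota A n) = f (Suc n)" for n using Ti[of n] f by (simp add: g_def iota_def)
      define S where "S = Abs_ch ` X"
      define R where "R = {F. \<exists>h\<in>A. (\<forall>n. Im (h n) = 0) \<and> (\<forall>\<phi>\<in>X. F (Abs_ch \<phi>) = Re (\<phi> h))}"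
      have RS: "function_ring_on R S"
      proof
        show "compact S" unfolding S_def
          by (rule compact_continuous_image[OF continuous_on_subset[OF cont_Abs_ch subset_UNIV] compact_X])
      next
        fix F assume "F \<in> R"
        then obtain h where h: "h \<in> A" "\<forall>\<phi>\<in>X. F (Abs_ch \<phi>) = Re (\<phi> h)" unfolding R_def by blast
        have "continuous_on X (\<lambda>\<phi>. \<phi> h)"
          by (rule continuous_on_subset[OF continuous_on_product_coordinates subset_UNIV])
        then have "continuous_on X (\<lambda>\<phi>. Re (\<phi> h))" by (rule continuous_on_Re)
        then have "continuous_on S (\<lambda>x. Re (Rep_ch x h))" unfolding S_def by (rule lift_cont)
        then show "continuous_on S F"
          by (rule continuous_on_cong[THEN iffD1, OF refl, rotated]) (use h in \<open>auto simp: S_def Abs_ch_inverse\<close>)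
      next
        fix F G assume "F \<in> R" "G \<in> R"
        then obtain h k where h: "h \<in> A" "\<forall>n. Im (h n) = 0" "\<forall>\<phi>\<in>X. F (Abs_ch \<phi>) = Re (\<phi> h)"
          and k: "k \<in> A" "\<forall>n. Im (k n) = 0" "\<forall>\<phi>\<in>X. G (Abs_ch \<phi>) = Re (\<phi> k)" unfolding R_def by blast
        show "(\<lambda>x. F x + G x) \<in> R" unfolding R_def
        proof (intro CollectI bexI[of _ "\<lambda>n. h n + k n"] conjI ballI allI)
          show "(\<lambda>n. h n + k n) \<in> A" by (rule add[OF h(1) k(1)])
          show "Im (h n + k n) = 0" for n using h(2) k(2) by simp
          show "F (Abs_ch \<phi>) + G (Abs_ch \<phi>) = Re (\<phi> (\<lambda>n. h n + k n))" if "\<phi> \<in> X" for \<phi>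
            using h(3) k(3) that charD(2)[OF that h(1) k(1)] by simp
        qed
        show "(\<lambda>x. F x * G x) \<in> R" unfolding R_def
        proof (intro CollectI bexI[of _ "\<lambda>n. h n * k n"] conjI ballI allI)
          show "(\<lambda>n. h n * k n) \<in> A" by (rule mult[OF h(1) k(1)])
          show "Im (h n * k n) = 0" for n using h(2) k(2) by simp
          show "F (Abs_ch \<phi>) * G (Abs_ch \<phi>) = Re (\<phi> (\<lambda>n. h n * k n))" if "\<phi> \<in> X" for \<phi>
            using h(3) k(3) that charD(4)[OF that h(1) k(1)] char_real[OF that h(1)] char_real[OF that k(1)] h(2) k(2)
            by simp
        qed
      next
        fix c :: real
        show "(\<lambda>_. c) \<in> R" unfolding R_def
        proof (intro CollectI bexI[of _ "\<lambda>n. complex_of_real c"] conjI ballI allI)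
          show "(\<lambda>n. complex_of_real c) \<in> A" by (rule const)
          show "c = Re (\<phi> (\<lambda>n. complex_of_real c))" if "\<phi> \<in> X" for \<phi>
            using char_const[OF that] by simp
        qed simp
      next
        fix x y assume xy: "x \<in> S" "y \<in> S" "x \<noteq> y"
        then obtain \<phi> \<psi> where p: "\<phi> \<in> X" "\<psi> \<in> X" "x = Abs_ch \<phi>" "y = Abs_ch \<psi>" unfolding S_def by blast
        then have "\<phi> \<noteq> \<psi>" using xy by auto
        then obtain h where hd: "\<phi> h \<noteq> \<psi> h" by auto
        have h: "h \<in> A"
        proof (rule ccontr)
          assume "h \<notin> A"
          then have "\<phi> h = undefined" "\<psi> h = undefined" using charD(1)[OF p(1)] charD(1)[OF p(2)]
            by (auto simp: extensional_def)
          then show False using hd by simp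
        qed
        define u where "u = (\<lambda>n. complex_of_real (Re (h n)))"
        define v where "v = (\<lambda>n. complex_of_real (Im (h n)))"
        have uA: "u \<in> A" "v \<in> A" unfolding u_def v_def using reA[OF h] imA[OF h] by auto
        have ur: "Im (\<phi> u) = 0" "Im (\<psi> u) = 0" "Im (\<phi> v) = 0" "Im (\<psi> v) = 0"
          using char_real[OF p(1) uA(1)] char_real[OF p(2) uA(1)] char_real[OF p(1) uA(2)] char_real[OF p(2) uA(2)]
          by (simp_all add: u_def v_def)
        have dec: "\<phi> h = \<phi> u + \<i> * \<phi> v" "\<psi> h = \<psi> u + \<i> * \<psi> v"
          using char_decomp[OF p(1) h] char_decomp[OF p(2) h] by (simp_all add: u_def v_def)
        have "Re (\<phi> u) \<noteq> Re (\<psi> u) \<or> Re (\<phi> v) \<noteq> Re (\<psi> v)"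
        proof (rule ccontr)
          assume "\<not> ?thesis"
          then have "\<phi> u = \<psi> u" "\<phi> v = \<psi> v" using ur by (auto simp: complex_eq_iff)
          then show False using hd dec by simp
        qed
        then show "\<exists>F\<in>R. F x \<noteq> F y"
        proof
          assume "Re (\<phi> u) \<noteq> Re (\<psi> u)"
          moreover have "(\<lambda>z. Re (Rep_ch z u)) \<in> R" unfolding R_def
            using uA by (intro CollectI bexI[of _ u]) (auto simp: u_def Abs_ch_inverse)
          ultimately show ?thesis using p by (intro bexI[of _ "\<lambda>z. Re (Rep_ch z u)"]) (auto simp: Abs_ch_inverse)
        next
          assume "Re (\<phi> v) \<noteq> Re (\<psi> v)"
          moreover have "(\<lambda>z. Re (Rep_ch z v)) \<in> R" unfolding R_def
            using uA by (intro CollectI bexI[of _ v]) (auto simp: v_def Abs_ch_inverse)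
          ultimately show ?thesis using p by (intro bexI[of _ "\<lambda>z. Re (Rep_ch z v)"]) (auto simp: Abs_ch_inverse)
        qed
      qed
      interpret fr: function_ring_on R S by (rule RS)
      show "shiftA f \<in> A"
      proof (rule closedA)
        have "bounded (range f)" using f sub by (auto simp: linfty_def)
        moreover have "range (shiftA f) \<subseteq> range f" by (auto simp: shiftA_def)
        ultimately show "shiftA f \<in> linfty" unfolding linfty_def using bounded_subset by blast
      next
        fix e :: real assume e: "e > 0"
        have cR: "continuous_on S (\<lambda>x. Re (g (Rep_ch x)))" unfolding S_def
          by (rule lift_cont) (rule continuous_on_Re[OF gc])
        have cI: "continuous_on S (\<lambda>x. Im (g (Rep_ch x)))" unfolding S_def
          by (rule lift_cont) (rule continuous_on_Im[OF gc])
        obtain F1 where F1: "F1 \<in> R" "\<forall>x\<in>S. \<bar>Re (g (Rep_ch x)) - F1 x\<bar> < e/2"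
          using fr.Stone_Weierstrass_basic[OF cR, of "e/2"] e by auto
        obtain F2 where F2: "F2 \<in> R" "\<forall>x\<in>S. \<bar>Im (g (Rep_ch x)) - F2 x\<bar> < e/2"
          using fr.Stone_Weierstrass_basic[OF cI, of "e/2"] e by auto
        obtain h1 where h1: "h1 \<in> A" "\<forall>n. Im (h1 n) = 0" "\<forall>\<phi>\<in>X. F1 (Abs_ch \<phi>) = Re (\<phi> h1)"
          using F1(1) unfolding R_def by blast
        obtain h2 where h2: "h2 \<in> A" "\<forall>n. Im (h2 n) = 0" "\<forall>\<phi>\<in>X. F2 (Abs_ch \<phi>) = Re (\<phi> h2)"
          using F2(1) unfolding R_def by blast
        have wA: "(\<lambda>n. h1 n + \<i> * h2 n) \<in> A" by (rule add[OF h1(1) smult[OF h2(1)]])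
        have "\<forall>n. norm (shiftA f n - (h1 n + \<i> * h2 n)) \<le> e"
        proof
          fix n
          have xS: "Abs_ch (iota A n) \<in> S" unfolding S_def using iota_in by blast
          have r: "Rep_ch (Abs_ch (iota A n)) = iota A n" by (simp add: Abs_ch_inverse)
          have a1: "\<bar>Re (f (Suc n)) - Re (h1 n)\<bar> < e/2"
            using F1(2)[rule_format, OF xS] h1(3)[rule_format, OF iota_in[of n]] r gi[of n] h1(1)
            by (simp add: iota_def)
          have a2: "\<bar>Im (f (Suc n)) - Re (h2 n)\<bar> < e/2"
            using F2(2)[rule_format, OF xS] h2(3)[rule_format, OF iota_in[of n]] r gi[of n] h2(1)
            by (simp add: iota_def)
          have "norm (shiftA f n - (h1 n + \<i> * h2 n)) \<le>
              \<bar>Re (shiftA f n - (h1 n + \<i> * h2 n))\<bar> + \<bar>Im (shiftA f n - (h1 n + \<i> * h2 n))\<bar>"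
            by (rule cmod_le)
          also have "\<dots> = \<bar>Re (f (Suc n)) - Re (h1 n)\<bar> + \<bar>Im (f (Suc n)) - Re (h2 n)\<bar>"
            using h1(2) h2(2) by (simp add: shiftA_def)
          also have "\<dots> \<le> e" using a1 a2 by simp
          finally show "norm (shiftA f n - (h1 n + \<i> * h2 n)) \<le> e" .
        qed
        then show "\<exists>g\<in>A. \<forall>n. norm (shiftA f n - g n) \<le> e" using wA
          by (intro bexI[of _ "\<lambda>n. h1 n + \<i> * h2 n"]) auto
      qed
    qed
  qed
qed

end
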